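(* The variety $\mathsf{V}(S_{(4,471)})$ is the ai-semiring variety defined by the identities $xy\approx yx$, $x^2\approx x^2+xy$, $x_1\approx x_1+x_2x_3x_4$.
   Context: An ai-semiring is an algebra $(S,+,\cdot)$ with $(S,+)$ a semilattice, $(S,\cdot)$ a semigroup, and both distributive laws. $\mathsf{V}(S)$ is the variety generated by $S$; "the ai-semiring variety defined by identities $\Sigma$" is the class of all ai-semirings satisfying $\Sigma$ (equivalently, an identity holds in $S$ iff it follows from $\Sigma$ and the ai-semiring axioms). $S_{(4,471)}$ has carrier $\{1,2,3,4\}$; addition: $x+x=x$, $2+x=x$, $1+x=1$ for all $x$, $3+4=1$; multiplication (row $a$, column $b$ gives $a\cdot b$): row $1$: $3,2,2,3$; row $2$: $2,2,2,2$; row $3$: $2,2,2,2$; row $4$: $3,2,2,3$. *)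

theory Defs
  imports Main
begin

datatype trm = Var nat | Plus trm trm (infixl "\<oplus>" 65) | Times trm trm (infixl "\<odot>" 70)

fun subst :: "(nat \<Rightarrow> trm) \<Rightarrow> trm \<Rightarrow> trm" where
  "subst \<sigma> (Var n) = \<sigma> n"
| "subst \<sigma> (Plus a b) = Plus (subst \<sigma> a) (subst \<sigma> b)"
| "subst \<sigma> (Times a b) = Times (subst \<sigma> a) (subst \<sigma> b)"

definition ai_semiring_axioms :: "(trm \<times> trm) set" where
  "ai_semiring_axioms =
    { (Var 0 \<oplus> Var 0, Var 0),
      (Var 0 \<oplus> Var 1, Var 1 \<oplus> Var 0),
      ((Var 0 \<oplus> Var 1) \<oplus> Var 2, Var 0 \<oplus> (Var 1 \<oplus> Var 2)),
      ((Var 0 \<odot> Var 1) \<odot> Var 2, Var 0 \<odot> (Var 1 \<odot> Var 2)),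
      (Var 0 \<odot> (Var 1 \<oplus> Var 2), Var 0 \<odot> Var 1 \<oplus> Var 0 \<odot> Var 2),
      ((Var 0 \<oplus> Var 1) \<odot> Var 2, Var 0 \<odot> Var 2 \<oplus> Var 1 \<odot> Var 2) }"

definition Sigma_4_471 :: "(trm \<times> trm) set" where
  "Sigma_4_471 =
    { (Var 0 \<odot> Var 1, Var 1 \<odot> Var 0),
      (Var 0 \<odot> Var 0, Var 0 \<odot> Var 0 \<oplus> Var 0 \<odot> Var 1),
      (Var 1, Var 1 \<oplus> Var 2 \<odot> Var 3 \<odot> Var 4) }"

inductive derivable :: "(trm \<times> trm) set \<Rightarrow> trm \<Rightarrow> trm \<Rightarrow> bool" for E where
  ax: "(l, r) \<in> E \<Longrightarrow> derivable E (subst \<sigma> l) (subst \<sigma> r)"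
| refl: "derivable E t t"
| sym: "derivable E s t \<Longrightarrow> derivable E t s"
| trans: "derivable E s t \<Longrightarrow> derivable E t u \<Longrightarrow> derivable E s u"
| cong_plus: "derivable E s t \<Longrightarrow> derivable E s' t' \<Longrightarrow> derivable E (Plus s s') (Plus t t')"
| cong_times: "derivable E s t \<Longrightarrow> derivable E s' t' \<Longrightarrow> derivable E (Times s s') (Times t t')"

datatype el = E1 | E2 | E3 | E4

fun addS :: "el \<Rightarrow> el \<Rightarrow> el" where
  "addS E1 _ = E1"
| "addS _ E1 = E1"
| "addS E2 x = x"
| "addS x E2 = x"
| "addS E3 E3 = E3"
| "addS E4 E4 = E4"
| "addS E3 E4 = E1"
| "addS E4 E3 = E1"

fun mulS :: "el \<Rightarrow> el \<Rightarrow> el" where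
  "mulS E1 E1 = E3" | "mulS E1 E2 = E2" | "mulS E1 E3 = E2" | "mulS E1 E4 = E3"
| "mulS E2 _ = E2"
| "mulS E3 _ = E2"
| "mulS E4 E1 = E3" | "mulS E4 E2 = E2" | "mulS E4 E3 = E2" | "mulS E4 E4 = E3"

fun evalS :: "(nat \<Rightarrow> el) \<Rightarrow> trm \<Rightarrow> el" where
  "evalS \<rho> (Var n) = \<rho> n"
| "evalS \<rho> (Plus a b) = addS (evalS \<rho> a) (evalS \<rho> b)"
| "evalS \<rho> (Times a b) = mulS (evalS \<rho> a) (evalS \<rho> b)"

definition holds_in_S :: "trm \<Rightarrow> trm \<Rightarrow> bool" where
  "holds_in_S u v \<longleftrightarrow> (\<forall>\<rho>. evalS \<rho> u = evalS \<rho> v)"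

end

theory Submission
  imports Defs
begin

abbreviation EE :: "(trm \<times> trm) set" where
  "EE \<equiv> ai_semiring_axioms \<union> Sigma_4_471"

abbreviation DD :: "trm \<Rightarrow> trm \<Rightarrow> bool" where
  "DD \<equiv> derivable EE"

lemma ax_inst:
  fixes l r :: trm and \<sigma> :: "nat \<Rightarrow> trm" and a b :: trm
  assumes "(l, r) \<in> EE" "a = subst \<sigma> l" "b = subst \<sigma> r"
  shows "DD a b"
  using derivable.ax[OF assms(1), of \<sigma>] assms by simp

lemma idem: "DD (a \<oplus> a) a"
  by (rule ax_inst[where l="Var 0 \<oplus> Var 0" and r="Var 0" and \<sigma>="\<lambda>n. a"]) (auto simp: ai_semiring_axioms_def)

lemma pcomm: "DD (a \<oplus> b) (b \<oplus> a)"
  by (rule ax_inst[where l="Var 0 \<oplus> Var 1" and r="Var 1 \<oplus> Var 0" and \<sigma>="\<lambda>n. if n = 0 then a else b"])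
     (auto simp: ai_semiring_axioms_def)

lemma passoc: "DD ((a \<oplus> b) \<oplus> c) (a \<oplus> (b \<oplus> c))"
  by (rule ax_inst[where l="(Var 0 \<oplus> Var 1) \<oplus> Var 2" and r="Var 0 \<oplus> (Var 1 \<oplus> Var 2)" and \<sigma>="\<lambda>n. if n = 0 then a else if n = 1 then b else c"])
     (auto simp: ai_semiring_axioms_def)

lemma massoc: "DD ((a \<odot> b) \<odot> c) (a \<odot> (b \<odot> c))"
  by (rule ax_inst[where l="(Var 0 \<odot> Var 1) \<odot> Var 2" and r="Var 0 \<odot> (Var 1 \<odot> Var 2)" and \<sigma>="\<lambda>n. if n = 0 then a else if n = 1 then b else c"])
     (auto simp: ai_semiring_axioms_def)

lemma distl: "DD (a \<odot> (b \<oplus> c)) (a \<odot> b \<oplus> a \<odot> c)"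
  by (rule ax_inst[where l="Var 0 \<odot> (Var 1 \<oplus> Var 2)" and r="Var 0 \<odot> Var 1 \<oplus> Var 0 \<odot> Var 2" and \<sigma>="\<lambda>n. if n = 0 then a else if n = 1 then b else c"])
     (auto simp: ai_semiring_axioms_def)

lemma distr: "DD ((a \<oplus> b) \<odot> c) (a \<odot> c \<oplus> b \<odot> c)"
  by (rule ax_inst[where l="(Var 0 \<oplus> Var 1) \<odot> Var 2" and r="Var 0 \<odot> Var 2 \<oplus> Var 1 \<odot> Var 2" and \<sigma>="\<lambda>n. if n = 0 then a else if n = 1 then b else c"])
     (auto simp: ai_semiring_axioms_def)

lemma mcomm: "DD (a \<odot> b) (b \<odot> a)"
  by (rule ax_inst[where l="Var 0 \<odot> Var 1" and r="Var 1 \<odot> Var 0" and \<sigma>="\<lambda>n. if n = 0 then a else b"])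
     (auto simp: Sigma_4_471_def)

lemma sq: "DD (a \<odot> a) (a \<odot> a \<oplus> a \<odot> b)"
  by (rule ax_inst[where l="Var 0 \<odot> Var 0" and r="Var 0 \<odot> Var 0 \<oplus> Var 0 \<odot> Var 1" and \<sigma>="\<lambda>n. if n = 0 then a else b"])
     (auto simp: Sigma_4_471_def)

lemma absorb: "DD u (u \<oplus> a \<odot> b \<odot> c)"
  by (rule ax_inst[where l="Var 1" and r="Var 1 \<oplus> Var 2 \<odot> Var 3 \<odot> Var 4" and \<sigma>="\<lambda>n. if n = 1 then u else if n = 2 then a else if n = 3 then b else c"])
     (auto simp: Sigma_4_471_def)

lemmas dsym = derivable.sym
lemmas dtrans = derivable.trans
lemmas drefl = derivable.refl
lemmas dplus = derivable.cong_plus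
lemmas dtimes = derivable.cong_times

declare derivable.trans[trans]

definition lq :: "trm \<Rightarrow> trm \<Rightarrow> bool" where
  "lq u v \<longleftrightarrow> DD u (u \<oplus> v)"

lemma lq_of_D: "DD u v \<Longrightarrow> lq u v"
  unfolding lq_def
  by (meson dsym dtrans drefl dplus idem)

lemma lq_refl: "lq u u" by (rule lq_of_D[OF drefl])

lemma lq_congr_left: "DD u u' \<Longrightarrow> lq u v \<Longrightarrow> lq u' v"
  unfolding lq_def by (meson dsym dtrans drefl dplus)

lemma lq_congr_right: "DD v v' \<Longrightarrow> lq u v' \<Longrightarrow> lq u v"
  unfolding lq_def by (meson dsym dtrans drefl dplus)

lemma lq_trans: "lq u v \<Longrightarrow> lq v w \<Longrightarrow> lq u w"
proof -
  assume a: "lq u v" and b: "lq v w"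
  have "DD u (u \<oplus> v)" using a lq_def by auto
  also have "DD (u \<oplus> v) (u \<oplus> (v \<oplus> w))" using b unfolding lq_def by (rule dplus[OF drefl])
  also have "DD (u \<oplus> (v \<oplus> w)) ((u \<oplus> v) \<oplus> w)" by (rule dsym[OF passoc])
  also have "DD ((u \<oplus> v) \<oplus> w) (u \<oplus> w)" using a unfolding lq_def by (rule dplus[OF dsym drefl])
  finally show ?thesis unfolding lq_def .
qed


lemma lq_plus: "lq u a \<Longrightarrow> lq u b \<Longrightarrow> lq u (a \<oplus> b)"
proof -
  assume a: "lq u a" and b: "lq u b"
  have "DD u (u \<oplus> a)" using a lq_def by auto
  also have "DD (u \<oplus> a) ((u \<oplus> b) \<oplus> a)" using b unfolding lq_def by (rule dplus[OF _ drefl])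
  also have "DD ((u \<oplus> b) \<oplus> a) (u \<oplus> (b \<oplus> a))" by (rule passoc)
  also have "DD (u \<oplus> (b \<oplus> a)) (u \<oplus> (a \<oplus> b))" by (rule dplus[OF drefl pcomm])
  finally show ?thesis unfolding lq_def .
qed

lemma lq_plusL: "lq (a \<oplus> b) a"
proof -
  have "DD ((a \<oplus> b) \<oplus> a) (a \<oplus> (b \<oplus> a))" by (rule passoc)
  also have "DD (a \<oplus> (b \<oplus> a)) (a \<oplus> (a \<oplus> b))" by (rule dplus[OF drefl pcomm])
  also have "DD (a \<oplus> (a \<oplus> b)) ((a \<oplus> a) \<oplus> b)" by (rule dsym[OF passoc])
  also have "DD ((a \<oplus> a) \<oplus> b) (a \<oplus> b)" by (rule dplus[OF idem drefl])
  finally show ?thesis unfolding lq_def by (rule dsym)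
qed

lemma lq_plusR: "lq (a \<oplus> b) b"
  using lq_congr_left[OF pcomm lq_plusL] .

lemma lq_times_mono: "lq a a' \<Longrightarrow> lq b b' \<Longrightarrow> lq (a \<odot> b) (a' \<odot> b')"
proof -
  assume a: "lq a a'" and b: "lq b b'"
  have "DD ((a \<oplus> a') \<odot> (b \<oplus> b')) (a \<odot> (b \<oplus> b') \<oplus> a' \<odot> (b \<oplus> b'))" by (rule distr)
  also have "DD (a \<odot> (b \<oplus> b') \<oplus> a' \<odot> (b \<oplus> b')) ((a \<odot> b \<oplus> a \<odot> b') \<oplus> (a' \<odot> b \<oplus> a' \<odot> b'))"
    by (rule dplus[OF distl distl])
  finally have e: "DD ((a \<oplus> a') \<odot> (b \<oplus> b')) ((a \<odot> b \<oplus> a \<odot> b') \<oplus> (a' \<odot> b \<oplus> a' \<odot> b'))" .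
  have "lq ((a \<odot> b \<oplus> a \<odot> b') \<oplus> (a' \<odot> b \<oplus> a' \<odot> b')) (a' \<odot> b')"
    by (rule lq_trans[OF lq_plusR lq_plusR])
  hence "lq ((a \<oplus> a') \<odot> (b \<oplus> b')) (a' \<odot> b')" by (rule lq_congr_left[OF dsym[OF e]])
  moreover have "DD ((a \<oplus> a') \<odot> (b \<oplus> b')) (a \<odot> b)"
    using a b unfolding lq_def by (rule dsym[OF dtimes])
  ultimately show ?thesis by (rule lq_congr_left[rotated])
qed

fun LL :: "trm \<Rightarrow> nat set" where
  "LL (Var x) = {x}"
| "LL (Plus a b) = LL a \<union> LL b"
| "LL (Times a b) = {}"

fun MM :: "trm \<Rightarrow> (nat \<times> nat) set" where
  "MM (Var x) = {}"
| "MM (Plus a b) = MM a \<union> MM b"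
| "MM (Times a b) = LL a \<times> LL b"

lemma L1: "x \<in> LL u \<Longrightarrow> lq u (Var x)"
  by (induction u) (auto intro: lq_refl lq_trans[OF lq_plusL] lq_trans[OF lq_plusR])

lemma L2: "(p, q) \<in> MM u \<Longrightarrow> lq u (Var p \<odot> Var q)"
  by (induction u) (auto intro: lq_times_mono L1 lq_trans[OF lq_plusL] lq_trans[OF lq_plusR])

lemma L3: "p \<in> {x, y} \<Longrightarrow> q \<in> {x, y} \<Longrightarrow> lq (Var p \<odot> Var q) (Var x \<odot> Var y)"
proof -
  assume "p \<in> {x, y}" "q \<in> {x, y}"
  then consider "p = x" "q = y" | "p = y" "q = x" | "p = x" "q = x" | "p = y" "q = y" by auto
  then show ?thesis
  proof cases
    case 1 then show ?thesis by (simp add: lq_refl)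
  next
    case 2 then show ?thesis by (simp add: lq_of_D mcomm)
  next
    case 3 then show ?thesis unfolding lq_def by (simp add: sq)
  next
    case 4 then show ?thesis using lq_trans[OF sq[of "Var y" "Var x", folded lq_def] lq_of_D[OF mcomm]]
      by simp
  qed
qed

lemma absorb_lq: "lq u (a \<odot> b \<odot> c)"
  unfolding lq_def by (rule absorb)

lemma L4: "(\<forall>x\<in>LL a. \<forall>y\<in>LL b. lq u (Var x \<odot> Var y)) \<Longrightarrow> lq u (a \<odot> b)"
proof (induction a arbitrary: b)
  case (Var x)
  then show ?case
  proof (induction b)
    case (Var y) then show ?case by simp
  next
    case (Plus b1 b2)
    have "lq u (Var x \<odot> b1 \<oplus> Var x \<odot> b2)" using Plus by (intro lq_plus) auto
    then show ?case by (rule lq_congr_right[OF distl])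
  next
    case (Times c d)
    show ?case by (rule lq_congr_right[OF dsym[OF massoc] absorb_lq])
  qed
next
  case (Plus a1 a2)
  have "lq u (a1 \<odot> b \<oplus> a2 \<odot> b)" using Plus by (intro lq_plus) auto
  then show ?case by (rule lq_congr_right[OF distr])
next
  case (Times c d)
  show ?case by (rule absorb_lq)
qed

definition sem_ge :: "trm \<Rightarrow> trm \<Rightarrow> bool" where
  "sem_ge u v \<longleftrightarrow> (\<forall>\<rho>. evalS \<rho> u = addS (evalS \<rho> u) (evalS \<rho> v))"

lemma fin_plus: "x = addS x (addS a b) \<Longrightarrow> x = addS x a \<and> x = addS x b"
  by (cases x; cases a; cases b) auto

lemma fin_trans: "x = addS x y \<Longrightarrow> y = addS y z \<Longrightarrow> x = addS x z"
  by (cases x; cases y; cases z) auto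

lemma fin_mono: "a = addS a x \<Longrightarrow> b = addS b y \<Longrightarrow> mulS a b = addS (mulS a b) (mulS x y)"
  by (cases a; cases b; cases x; cases y) auto

lemma sem_trans: "sem_ge u v \<Longrightarrow> sem_ge v w \<Longrightarrow> sem_ge u w"
  unfolding sem_ge_def by (metis fin_trans)

lemma fin_idem: "addS x x = x" by (cases x) auto
lemma fin_ge_plusL: "x = addS x z \<Longrightarrow> addS x y = addS (addS x y) z"
  by (cases x; cases y; cases z) auto
lemma fin_ge_plusR: "y = addS y z \<Longrightarrow> addS x y = addS (addS x y) z"
  by (cases x; cases y; cases z) auto

lemma sem_LL: "x \<in> LL a \<Longrightarrow> sem_ge a (Var x)"
  by (induction a) (auto simp: sem_ge_def fin_idem intro: fin_ge_plusL fin_ge_plusR)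

lemma eval23: "evalS (\<lambda>n. if n = x then E3 else E2) t \<in> {E2, E3}"
proof (induction t)
  case (Plus a b) then show ?case by (auto elim!: insertE)
next
  case (Times a b) then show ?case by (auto elim!: insertE)
qed auto

lemma notL: "x \<notin> LL u \<Longrightarrow> evalS (\<lambda>n. if n = x then E3 else E2) u = E2"
proof (induction u)
  case (Times a b)
  then show ?case using eval23[of x a] eval23[of x b] by auto
qed auto

lemma L14: "evalS \<rho> t \<in> {E1, E4} \<Longrightarrow> \<exists>p\<in>LL t. \<rho> p \<in> {E1, E4}"
proof (induction t)
  case (Plus a b)
  have "evalS \<rho> a \<in> {E1, E4} \<or> evalS \<rho> b \<in> {E1, E4}"
    using Plus.prems by (cases "evalS \<rho> a"; cases "evalS \<rho> b") auto
  then show ?case using Plus.IH by auto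
next
  case (Times a b)
  then show ?case by (cases "evalS \<rho> a"; cases "evalS \<rho> b") auto
qed auto

lemma fin24: "a \<in> {E2, E4} \<Longrightarrow> b \<in> {E2, E4} \<Longrightarrow> addS a b \<in> {E2, E4}"
  by auto

lemma r14: "(if n = x \<or> n = y then E4 else E2) \<in> {E1, E4} \<Longrightarrow> n \<in> {x, y}"
  by (cases "n = x \<or> n = y") auto

lemma noM: "(\<forall>(p, q)\<in>MM u. \<not> (p \<in> {x, y} \<and> q \<in> {x, y})) \<Longrightarrow>
  evalS (\<lambda>n. if n = x \<or> n = y then E4 else E2) u \<in> {E2, E4}"
proof (induction u)
  case (Var n)
  show ?case by (cases "n = x \<or> n = y") simp_all
next
  case (Plus a b)
  have "evalS (\<lambda>n. if n = x \<or> n = y then E4 else E2) a \<in> {E2, E4}"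
    using Plus.prems by (intro Plus.IH(1)) simp
  moreover have "evalS (\<lambda>n. if n = x \<or> n = y then E4 else E2) b \<in> {E2, E4}"
    using Plus.prems by (intro Plus.IH(2)) simp
  ultimately show ?case by (simp only: evalS.simps fin24)
next
  case (Times a b)
  let ?r = "\<lambda>n. if n = x \<or> n = y then E4 else E2"
  show ?case
  proof (rule ccontr)
    assume "evalS ?r (a \<odot> b) \<notin> {E2, E4}"
    hence "evalS ?r a \<in> {E1, E4} \<and> evalS ?r b \<in> {E1, E4}"
      by (cases "evalS ?r a"; cases "evalS ?r b"; simp)
    hence ha: "evalS ?r a \<in> {E1, E4}" and hb: "evalS ?r b \<in> {E1, E4}" by auto
    obtain p where p1: "p \<in> LL a" and p2: "?r p \<in> {E1, E4}" using L14[OF ha] by (elim bexE)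
    obtain q where q1: "q \<in> LL b" and q2: "?r q \<in> {E1, E4}" using L14[OF hb] by (elim bexE)
    have "(p, q) \<in> MM (a \<odot> b)" using p1 q1 by simp
    with Times.prems have "\<not> (p \<in> {x, y} \<and> q \<in> {x, y})" by fast
    with r14[OF p2] r14[OF q2] show False by simp
  qed
qed

lemma semB: "sem_ge u (Var x \<odot> Var y) \<Longrightarrow> lq u (Var x \<odot> Var y)"
proof -
  assume s: "sem_ge u (Var x \<odot> Var y)"
  have "\<exists>(p, q)\<in>MM u. p \<in> {x, y} \<and> q \<in> {x, y}"
  proof (rule ccontr)
    assume "\<not> ?thesis"
    hence "evalS (\<lambda>n. if n = x \<or> n = y then E4 else E2) u \<in> {E2, E4}"
      by (intro noM) auto
    moreover have "evalS (\<lambda>n. if n = x \<or> n = y then E4 else E2) u =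
      addS (evalS (\<lambda>n. if n = x \<or> n = y then E4 else E2) u) E3"
      using s unfolding sem_ge_def by (erule_tac x="\<lambda>n. if n = x \<or> n = y then E4 else E2" in allE) simp
    ultimately show False by auto
  qed
  then obtain p q where "(p, q) \<in> MM u" "p \<in> {x, y}" "q \<in> {x, y}" by auto
  then show ?thesis using lq_trans[OF L2 L3] by blast
qed

lemma semA: "sem_ge u (Var x) \<Longrightarrow> lq u (Var x)"
proof -
  assume s: "sem_ge u (Var x)"
  have "x \<in> LL u"
  proof (rule ccontr)
    assume "x \<notin> LL u"
    hence "evalS (\<lambda>n. if n = x then E3 else E2) u = E2" by (rule notL)
    moreover have "evalS (\<lambda>n. if n = x then E3 else E2) u =
      addS (evalS (\<lambda>n. if n = x then E3 else E2) u) E3"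
      using s unfolding sem_ge_def by (erule_tac x="\<lambda>n. if n = x then E3 else E2" in allE) simp
    ultimately show False by auto
  qed
  then show ?thesis by (rule L1)
qed

lemma sem_lq: "sem_ge u v \<Longrightarrow> lq u v"
proof (induction v)
  case (Var x) then show ?case by (rule semA)
next
  case (Plus a b)
  then show ?case unfolding sem_ge_def by (metis fin_plus lq_plus evalS.simps(2))
next
  case (Times a b)
  show ?case
  proof (rule L4, intro ballI)
    fix x y assume "x \<in> LL a" "y \<in> LL b"
    hence "sem_ge (a \<odot> b) (Var x \<odot> Var y)"
      using sem_LL[of x a] sem_LL[of y b] unfolding sem_ge_def by (auto intro: fin_mono)
    hence "sem_ge u (Var x \<odot> Var y)" using Times.prems sem_trans by blast
    then show "lq u (Var x \<odot> Var y)" by (rule semB)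
  qed
qed

lemma eval_subst: "evalS \<rho> (subst \<sigma> t) = evalS (\<lambda>n. evalS \<rho> (\<sigma> n)) t"
  by (induction t) auto

lemma f_comm: "addS a b = addS b a" by (cases a; cases b) auto
lemma f_assoc: "addS (addS a b) c = addS a (addS b c)" by (cases a; cases b; cases c) auto
lemma f_massoc: "mulS (mulS a b) c = mulS a (mulS b c)" by (cases a; cases b; cases c) auto
lemma f_distl: "mulS a (addS b c) = addS (mulS a b) (mulS a c)" by (cases a; cases b; cases c) auto
lemma f_distr: "mulS (addS a b) c = addS (mulS a c) (mulS b c)" by (cases a; cases b; cases c) auto
lemma f_mcomm: "mulS a b = mulS b a" by (cases a; cases b) auto
lemma f_sq: "mulS a a = addS (mulS a a) (mulS a b)" by (cases a; cases b) auto
lemma f_abs: "x = addS x (mulS (mulS a b) c)" by (cases x; cases a; cases b; cases c) auto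

lemma f_abs2: "addS x (mulS a (mulS b c)) = x" by (cases x; cases a; cases b; cases c) auto
lemma f_lcomm: "addS b (addS a c) = addS a (addS b c)" by (cases a; cases b; cases c) auto

lemma axioms_sound: "(l, r) \<in> EE \<Longrightarrow> evalS \<rho> l = evalS \<rho> r"
  unfolding ai_semiring_axioms_def Sigma_4_471_def
  by (auto simp: fin_idem f_comm f_assoc f_massoc f_distl f_distr f_abs2 f_lcomm intro: f_mcomm f_sq)

lemma soundness: "DD u v \<Longrightarrow> holds_in_S u v"
  unfolding holds_in_S_def
proof (induction rule: derivable.induct)
  case (ax l r \<sigma>)
  then show ?case by (simp add: eval_subst axioms_sound)
qed auto

theorem proposition2p5:
  shows "\<forall>u v. holds_in_S u v \<longleftrightarrow>
           derivable (ai_semiring_axioms \<union> Sigma_4_471) u v"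
proof (intro allI iffI)
  fix u v
  assume h: "holds_in_S u v"
  have "sem_ge u v" "sem_ge v u" using h unfolding holds_in_S_def sem_ge_def
    by (auto simp: fin_idem)
  hence "lq u v" "lq v u" by (auto intro: sem_lq)
  hence "DD u (u \<oplus> v)" "DD v (v \<oplus> u)" unfolding lq_def by auto
  hence "DD u (v \<oplus> u)" using pcomm dtrans by blast
  thus "DD u v" using \<open>DD v (v \<oplus> u)\<close> dsym dtrans by blast
next
  fix u v
  assume "DD u v"
  thus "holds_in_S u v" by (rule soundness)
qed

end
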